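(* Let $O$ be a unitary operator and $P$ a self-adjoint orthogonal projection on a finite-dimensional Hilbert space such that $(\mathrm{Id}-P)O=\mathrm{Id}-P$. Then for any vector $\varphi$ and any density matrix $\sigma$, $$\left|\langle\varphi,(O\sigma O^\dagger-\sigma)\varphi\rangle\right|\leq 2\lVert P\varphi\rVert\,\lVert\varphi\rVert\left(\mathrm{tr}\bigl((O\sigma O^\dagger-\sigma)^2\bigr)\right)^{1/2}.$$ *)

theory Defs
  imports "Jordan_Normal_Form.Schur_Decomposition"
begin

text \<open>Finite-dimensional Hilbert space = complex column vectors of dimension n.
  Inner product is antilinear in the first argument (physics convention).\<close>

definition hinner :: "complex vec \<Rightarrow> complex vec \<Rightarrow> complex" where
  "hinner v w = w \<bullet>c v"

definition hnorm :: "complex vec \<Rightarrow> real" where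
  "hnorm v = sqrt (Re (hinner v v))"

definition mtrace :: "complex mat \<Rightarrow> complex" where
  "mtrace A = (\<Sum>i<dim_row A. A $$ (i, i))"

definition unitary_mat :: "nat \<Rightarrow> complex mat \<Rightarrow> bool" where
  "unitary_mat n U \<longleftrightarrow> U \<in> carrier_mat n n \<and>
     U * mat_adjoint U = 1\<^sub>m n \<and> mat_adjoint U * U = 1\<^sub>m n"

definition orth_projection :: "nat \<Rightarrow> complex mat \<Rightarrow> bool" where
  "orth_projection n P \<longleftrightarrow> P \<in> carrier_mat n n \<and>
     mat_adjoint P = P \<and> P * P = P"

definition density_matrix :: "nat \<Rightarrow> complex mat \<Rightarrow> bool" where
  "density_matrix n S \<longleftrightarrow> S \<in> carrier_mat n n \<and> mat_adjoint S = S \<and>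
     (\<forall>v \<in> carrier_vec n. Im (hinner v (S *\<^sub>v v)) = 0 \<and> Re (hinner v (S *\<^sub>v v)) \<ge> 0) \<and>
     mtrace S = 1"

end

theory Submission imports Defs "HOL-Analysis.L2_Norm" begin

lemma hinner_sum: "v \<in> carrier_vec n \<Longrightarrow> w \<in> carrier_vec n \<Longrightarrow>
  hinner v w = (\<Sum>i<n. cnj (v $ i) * w $ i)"
  unfolding hinner_def scalar_prod_def by (auto simp: lessThan_atLeast0 mult.commute)

lemma L2_sq: "finite I \<Longrightarrow> (L2_set f I)^2 = (\<Sum>i\<in>I. (f i)^2)"
  unfolding L2_set_def by (simp add: sum_nonneg)

lemma re_hinner: "v \<in> carrier_vec n \<Longrightarrow> Re (hinner v v) = (\<Sum>i<n. (cmod (v $ i))^2)"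
proof -
  assume v: "v \<in> carrier_vec n"
  have "hinner v v = (\<Sum>i<n. of_real ((cmod (v $ i))^2))"
    unfolding hinner_sum[OF v v] by (intro sum.cong refl) (metis complex_norm_square mult.commute)
  thus ?thesis by (simp only: Re_sum Re_complex_of_real)
qed

lemma hnorm_L2: "v \<in> carrier_vec n \<Longrightarrow> hnorm v = L2_set (\<lambda>i. cmod (v $ i)) {..<n}"
  unfolding hnorm_def L2_set_def by (simp only: re_hinner)

lemma hnorm_sq: "v \<in> carrier_vec n \<Longrightarrow> (hnorm v)^2 = (\<Sum>i<n. (cmod (v $ i))^2)"
  by (simp only: hnorm_L2 L2_sq finite_lessThan)

lemma hnorm_nonneg: "hnorm v \<ge> 0"
  unfolding hnorm_L2[OF carrier_vec_dim_vec[of v]] by (rule L2_set_nonneg)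

lemma hinner_CS: "v \<in> carrier_vec n \<Longrightarrow> w \<in> carrier_vec n \<Longrightarrow>
  cmod (hinner v w) \<le> hnorm v * hnorm w"
proof -
  assume v: "v \<in> carrier_vec n" and w: "w \<in> carrier_vec n"
  have "cmod (hinner v w) \<le> (\<Sum>i<n. cmod (cnj (v $ i) * w $ i))"
    unfolding hinner_sum[OF v w] by (rule norm_sum)
  also have "\<dots> = (\<Sum>i<n. \<bar>cmod (v $ i)\<bar> * \<bar>cmod (w $ i)\<bar>)" by (simp add: norm_mult)
  also have "\<dots> \<le> L2_set (\<lambda>i. cmod (v $ i)) {..<n} * L2_set (\<lambda>i. cmod (w $ i)) {..<n}"
    by (rule L2_set_mult_ineq)
  finally show ?thesis using hnorm_L2[OF v] hnorm_L2[OF w] by simp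
qed

lemma adj_carrier: "A \<in> carrier_mat n m \<Longrightarrow> mat_adjoint A \<in> carrier_mat m n"
  unfolding mat_adjoint_def by (auto simp: mat_of_rows_def)

lemma adj_index: "A \<in> carrier_mat n m \<Longrightarrow> i < m \<Longrightarrow> j < n \<Longrightarrow> mat_adjoint A $$ (i,j) = cnj (A $$ (j,i))"
  unfolding mat_adjoint_def by (auto simp: mat_of_rows_def)

lemma hinner_adj: assumes A: "A \<in> carrier_mat n n" and u: "u \<in> carrier_vec n" and v: "v \<in> carrier_vec n"
  shows "hinner u (A *\<^sub>v v) = hinner (mat_adjoint A *\<^sub>v u) v"
proof -
  have c1: "A *\<^sub>v v \<in> carrier_vec n" using A v by auto
  have c2: "mat_adjoint A *\<^sub>v u \<in> carrier_vec n" using adj_carrier[OF A] u by auto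
  have "hinner u (A *\<^sub>v v) = (\<Sum>i<n. \<Sum>j<n. cnj (u $ i) * (A $$ (i,j) * v $ j))"
    unfolding hinner_sum[OF u c1] using A v
    by (intro sum.cong refl) (auto simp: scalar_prod_def row_def sum_distrib_left lessThan_atLeast0)
  also have "\<dots> = (\<Sum>j<n. \<Sum>i<n. cnj (u $ i) * (A $$ (i,j) * v $ j))" by (rule sum.swap)
  also have "\<dots> = hinner (mat_adjoint A *\<^sub>v u) v"
    unfolding hinner_sum[OF c2 v] using A u adj_carrier[OF A]
    by (intro sum.cong refl) (auto simp: scalar_prod_def row_def sum_distrib_right sum_distrib_left lessThan_atLeast0 adj_index mult.commute mult.left_commute)
  finally show ?thesis .
qed

lemma adj_mult: assumes A: "(A :: complex mat) \<in> carrier_mat n m" and B: "B \<in> carrier_mat m k"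
  shows "mat_adjoint (A * B) = mat_adjoint B * mat_adjoint A"
proof -
  have c: "A * B \<in> carrier_mat n k" using A B by auto
  show ?thesis
  apply (rule eq_matI)
  using A B adj_carrier[OF A] adj_carrier[OF B] adj_carrier[OF c]
  by (auto simp: adj_index[OF c] adj_index[OF A] adj_index[OF B] scalar_prod_def row_def col_def mult.commute
     intro!: sum.cong)
qed

lemma adj_minus: assumes A: "(A :: complex mat) \<in> carrier_mat n m" and B: "B \<in> carrier_mat n m"
  shows "mat_adjoint (A - B) = mat_adjoint A - mat_adjoint B"
proof -
  have c: "A - B \<in> carrier_mat n m" using A B by auto
  show ?thesis
  apply (rule eq_matI)
  using A B adj_carrier[OF A] adj_carrier[OF B] adj_carrier[OF c]
  by (auto simp: adj_index[OF c] adj_index[OF A] adj_index[OF B])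
qed

lemma adj_one: "mat_adjoint (1\<^sub>m n) = (1\<^sub>m n :: complex mat)"
proof -
  have c: "(1\<^sub>m n :: complex mat) \<in> carrier_mat n n" by auto
  show ?thesis
  apply (rule eq_matI)
  using adj_carrier[OF c]
  by (auto simp: adj_index[OF c])
qed

lemma adj_adj: "A \<in> carrier_mat n m \<Longrightarrow> mat_adjoint (mat_adjoint (A :: complex mat)) = A"
  apply (rule eq_matI)
  using adj_carrier[of A n m] adj_carrier[of "mat_adjoint A" m n]
  by (auto simp: adj_index)

lemma frob_bound: assumes A: "A \<in> carrier_mat n n" and v: "v \<in> carrier_vec n"
  shows "hnorm (A *\<^sub>v v) \<le> sqrt (\<Sum>i<n. \<Sum>j<n. (cmod (A $$ (i,j)))^2) * hnorm v"
proof -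
  have c: "A *\<^sub>v v \<in> carrier_vec n" using A v by auto
  have row: "(cmod ((A *\<^sub>v v) $ i))^2 \<le> (\<Sum>j<n. (cmod (A $$ (i,j)))^2) * (hnorm v)^2" if i: "i < n" for i
  proof -
    have "cmod ((A *\<^sub>v v) $ i) = cmod (\<Sum>j<n. A $$ (i,j) * v $ j)"
      using A v i by (auto simp: scalar_prod_def row_def lessThan_atLeast0)
    also have "\<dots> \<le> (\<Sum>j<n. \<bar>cmod (A $$ (i,j))\<bar> * \<bar>cmod (v $ j)\<bar>)"
      by (rule order_trans[OF norm_sum]) (simp add: norm_mult)
    also have "\<dots> \<le> L2_set (\<lambda>j. cmod (A $$ (i,j))) {..<n} * L2_set (\<lambda>j. cmod (v $ j)) {..<n}"
      by (rule L2_set_mult_ineq)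
    finally have le: "cmod ((A *\<^sub>v v) $ i) \<le> L2_set (\<lambda>j. cmod (A $$ (i,j))) {..<n} * hnorm v"
      using hnorm_L2[OF v] by simp
    have "(cmod ((A *\<^sub>v v) $ i))^2 \<le> (L2_set (\<lambda>j. cmod (A $$ (i,j))) {..<n} * hnorm v)^2"
      by (rule power_mono[OF le]) simp
    also have "\<dots> = (\<Sum>j<n. (cmod (A $$ (i,j)))^2) * (hnorm v)^2"
      by (simp add: power_mult_distrib L2_sq)
    finally show ?thesis .
  qed
  have "(hnorm (A *\<^sub>v v))^2 \<le> (\<Sum>i<n. (\<Sum>j<n. (cmod (A $$ (i,j)))^2) * (hnorm v)^2)"
    unfolding hnorm_sq[OF c] by (rule sum_mono) (use row in auto)
  also have "\<dots> = (sqrt (\<Sum>i<n. \<Sum>j<n. (cmod (A $$ (i,j)))^2) * hnorm v)^2"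
    by (simp add: power_mult_distrib sum_distrib_right sum_nonneg)
  finally show ?thesis
    by (rule power2_le_imp_le) (auto intro!: mult_nonneg_nonneg sum_nonneg simp: hnorm_nonneg)
qed

lemma trace_herm: assumes D: "D \<in> carrier_mat n n" and h: "mat_adjoint D = D"
  shows "Re (mtrace (D * D)) = (\<Sum>i<n. \<Sum>j<n. (cmod (D $$ (i,j)))^2)"
proof -
  have e: "D $$ (j,i) = cnj (D $$ (i,j))" if "i < n" "j < n" for i j
    using adj_index[OF D that(2) that(1)] h by simp
  have ii: "(D * D) $$ (i,i) = (\<Sum>j<n. of_real ((cmod (D $$ (i,j)))^2))" if i: "i < n" for i
  proof -
    have "(D * D) $$ (i,i) = (\<Sum>j<n. D $$ (i,j) * D $$ (j,i))"
      using D i by (simp add: scalar_prod_def lessThan_atLeast0)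
    also have "\<dots> = (\<Sum>j<n. of_real ((cmod (D $$ (i,j)))^2))"
    proof (rule sum.cong[OF refl])
      fix j assume "j \<in> {..<n}"
      hence "D $$ (j,i) = cnj (D $$ (i,j))" using e[OF i] by simp
      thus "D $$ (i,j) * D $$ (j,i) = of_real ((cmod (D $$ (i,j)))^2)"
        by (simp only: complex_norm_square)
    qed
    finally show ?thesis .
  qed
  have "mtrace (D * D) = (\<Sum>i<n. \<Sum>j<n. of_real ((cmod (D $$ (i,j)))^2))"
    unfolding mtrace_def using D ii by (intro sum.cong) auto
  thus ?thesis by (simp add: Re_sum)
qed



lemma hinner_add_left: "u \<in> carrier_vec n \<Longrightarrow> v \<in> carrier_vec n \<Longrightarrow> w \<in> carrier_vec n \<Longrightarrow>
  hinner (u + v) w = hinner u w + hinner v w"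
  by (simp add: hinner_sum[of _ n] sum.distrib distrib_right)

lemma hinner_add_right: "u \<in> carrier_vec n \<Longrightarrow> v \<in> carrier_vec n \<Longrightarrow> w \<in> carrier_vec n \<Longrightarrow>
  hinner u (v + w) = hinner u v + hinner u w"
  by (simp add: hinner_sum[of _ n] sum.distrib distrib_left)

lemma hinner_minus_right: "u \<in> carrier_vec n \<Longrightarrow> v \<in> carrier_vec n \<Longrightarrow> w \<in> carrier_vec n \<Longrightarrow>
  hinner u (v - w) = hinner u v - hinner u w"
  by (simp add: hinner_sum[of _ n] sum_subtractf right_diff_distrib)

theorem lemma3:
  fixes n :: nat and U P \<sigma> :: "complex mat" and \<phi> :: "complex vec"
  assumes "unitary_mat n U"
    and "orth_projection n P"
    and "(1\<^sub>m n - P) * U = 1\<^sub>m n - P"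
    and "\<phi> \<in> carrier_vec n"
    and "density_matrix n \<sigma>"
  shows "cmod (hinner \<phi> ((U * \<sigma> * mat_adjoint U - \<sigma>) *\<^sub>v \<phi>))
    \<le> 2 * hnorm (P *\<^sub>v \<phi>) * hnorm \<phi> *
       sqrt (Re (mtrace ((U * \<sigma> * mat_adjoint U - \<sigma>) * (U * \<sigma> * mat_adjoint U - \<sigma>))))"
proof -
  have U: "U \<in> carrier_mat n n" using assms(1) unfolding unitary_mat_def by auto
  have P: "P \<in> carrier_mat n n" and Ph: "mat_adjoint P = P" and PP: "P * P = P"
    using assms(2) unfolding orth_projection_def by auto
  have S: "\<sigma> \<in> carrier_mat n n" and Sh: "mat_adjoint \<sigma> = \<sigma>"
    using assms(5) unfolding density_matrix_def by auto
  have ph: "\<phi> \<in> carrier_vec n" by fact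
  define Q where "Q = 1\<^sub>m n - P"
  have Q: "Q \<in> carrier_mat n n" unfolding Q_def using P by auto
  have Qh: "mat_adjoint Q = Q" unfolding Q_def
    using adj_minus[of "1\<^sub>m n" n n P] P Ph adj_one by auto
  have UH: "mat_adjoint U \<in> carrier_mat n n" using adj_carrier[OF U] .
  have UQ: "mat_adjoint U * Q = Q"
  proof -
    have "mat_adjoint (Q * U) = mat_adjoint Q" using assms(3) unfolding Q_def by simp
    thus ?thesis using adj_mult[OF Q U] Qh by simp
  qed
  define D where "D = U * \<sigma> * mat_adjoint U - \<sigma>"
  have D: "D \<in> carrier_mat n n" unfolding D_def using U S UH by auto
  have Dh: "mat_adjoint D = D"
  proof -
    have "mat_adjoint (U * \<sigma> * mat_adjoint U) = mat_adjoint (mat_adjoint U) * mat_adjoint (U * \<sigma>)"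
      using adj_mult[of "U * \<sigma>" n n "mat_adjoint U" n] U S UH by auto
    also have "\<dots> = U * (\<sigma> * mat_adjoint U)"
      using adj_adj[OF U] adj_mult[OF U S] Sh by simp
    also have "\<dots> = U * \<sigma> * mat_adjoint U" using U S UH by (simp add: assoc_mult_mat)
    finally show ?thesis unfolding D_def
      using adj_minus[of "U * \<sigma> * mat_adjoint U" n n \<sigma>] U S UH Sh by auto
  qed
  define p where "p = P *\<^sub>v \<phi>"
  define q where "q = Q *\<^sub>v \<phi>"
  have pc: "p \<in> carrier_vec n" unfolding p_def using P ph by auto
  have qc: "q \<in> carrier_vec n" unfolding q_def using Q ph by auto
  have qeq: "q = \<phi> - p" unfolding q_def p_def Q_def
    using minus_mult_distrib_mat_vec[of "1\<^sub>m n" n n P \<phi>] P ph by auto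
  have phpq: "\<phi> = p + q" unfolding qeq using pc ph by (intro eq_vecI) auto
  have Uq: "mat_adjoint U *\<^sub>v q = q" unfolding q_def
    using assoc_mult_mat_vec[of "mat_adjoint U" n n Q n \<phi>, symmetric] UH Q ph UQ by simp
  have QQ: "Q *\<^sub>v q = q"
  proof -
    have "Q *\<^sub>v q = q - P *\<^sub>v q" unfolding Q_def
      using minus_mult_distrib_mat_vec[of "1\<^sub>m n" n n P q] P qc by auto
    also have "P *\<^sub>v q = P *\<^sub>v \<phi> - P *\<^sub>v p" unfolding qeq
      using mult_minus_distrib_mat_vec[of P n n \<phi> p] P ph pc by auto
    also have "P *\<^sub>v p = p" unfolding p_def
      using assoc_mult_mat_vec[of P n n P n \<phi>, symmetric] P ph PP by simp
    finally show ?thesis unfolding p_def using pc qc P ph by (intro eq_vecI) auto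
  qed
  have hq: "hnorm q \<le> hnorm \<phi>"
  proof -
    have "(hnorm q)^2 = Re (hinner q q)"
      by (simp only: hnorm_sq[OF qc] re_hinner[OF qc])
    also have "hinner q q = hinner (Q *\<^sub>v \<phi>) q" unfolding q_def ..
    also have "\<dots> = hinner \<phi> (Q *\<^sub>v q)"
      using hinner_adj[OF Q ph qc] Qh by simp
    also have "\<dots> = hinner \<phi> q" using QQ by simp
    finally have "(hnorm q)^2 \<le> cmod (hinner \<phi> q)"
      using complex_Re_le_cmod by simp
    also have "\<dots> \<le> hnorm \<phi> * hnorm q" by (rule hinner_CS[OF ph qc])
    finally have "hnorm q * hnorm q \<le> hnorm \<phi> * hnorm q" by (simp add: power2_eq_square)
    show ?thesis
    proof (cases "hnorm q = 0")
      case True thus ?thesis using hnorm_nonneg[of \<phi>] by simp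
    next
      case False hence "hnorm q > 0" using hnorm_nonneg[of q] by simp
      thus ?thesis using mult_right_le_imp_le[OF \<open>hnorm q * hnorm q \<le> hnorm \<phi> * hnorm q\<close>] by blast
    qed
  qed
  have zero: "hinner q (D *\<^sub>v q) = 0"
  proof -
    have "D *\<^sub>v q = U *\<^sub>v (\<sigma> *\<^sub>v (mat_adjoint U *\<^sub>v q)) - \<sigma> *\<^sub>v q" unfolding D_def
      using U S UH qc by (simp add: minus_mult_distrib_mat_vec[of _ n n] assoc_mult_mat_vec[of _ n n _ n])
    also have "\<dots> = U *\<^sub>v (\<sigma> *\<^sub>v q) - \<sigma> *\<^sub>v q" using Uq by simp
    finally have "hinner q (D *\<^sub>v q) = hinner q (U *\<^sub>v (\<sigma> *\<^sub>v q)) - hinner q (\<sigma> *\<^sub>v q)"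
      using hinner_minus_right[of q n "U *\<^sub>v (\<sigma> *\<^sub>v q)" "\<sigma> *\<^sub>v q"] qc U S by auto
    also have "hinner q (U *\<^sub>v (\<sigma> *\<^sub>v q)) = hinner q (\<sigma> *\<^sub>v q)"
      using hinner_adj[OF U qc, of "\<sigma> *\<^sub>v q"] S qc Uq by auto
    finally show ?thesis by simp
  qed
  define s where "s = sqrt (\<Sum>i<n. \<Sum>j<n. (cmod (D $$ (i,j)))^2)"
  have s0: "s \<ge> 0" unfolding s_def by (auto intro!: sum_nonneg)
  have expand: "hinner \<phi> (D *\<^sub>v \<phi>) = hinner p (D *\<^sub>v \<phi>) + hinner q (D *\<^sub>v p)"
  proof -
    have Dp: "D *\<^sub>v p \<in> carrier_vec n" "D *\<^sub>v q \<in> carrier_vec n" "D *\<^sub>v \<phi> \<in> carrier_vec n"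
      using D pc qc ph by auto
    have "hinner \<phi> (D *\<^sub>v \<phi>) = hinner p (D *\<^sub>v \<phi>) + hinner q (D *\<^sub>v \<phi>)"
      using hinner_add_left[OF pc qc Dp(3)] phpq by simp
    also have "D *\<^sub>v \<phi> = D *\<^sub>v p + D *\<^sub>v q"
      using phpq mult_add_distrib_mat_vec[OF D pc qc] by simp
    also have "hinner q (D *\<^sub>v p + D *\<^sub>v q) = hinner q (D *\<^sub>v p)"
      using hinner_add_right[OF qc Dp(1) Dp(2)] zero by simp
    finally show ?thesis using phpq mult_add_distrib_mat_vec[OF D pc qc] by simp
  qed
  have "cmod (hinner \<phi> (D *\<^sub>v \<phi>)) \<le> cmod (hinner p (D *\<^sub>v \<phi>)) + cmod (hinner q (D *\<^sub>v p))"
    unfolding expand by (rule norm_triangle_ineq)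
  also have "\<dots> \<le> hnorm p * hnorm (D *\<^sub>v \<phi>) + hnorm q * hnorm (D *\<^sub>v p)"
    using hinner_CS[OF pc, of "D *\<^sub>v \<phi>"] hinner_CS[OF qc, of "D *\<^sub>v p"] D ph pc
    by (intro add_mono) auto
  also have "\<dots> \<le> hnorm p * (s * hnorm \<phi>) + hnorm \<phi> * (s * hnorm p)"
    using frob_bound[OF D ph] frob_bound[OF D pc] hq hnorm_nonneg[of p] hnorm_nonneg[of q]
      hnorm_nonneg[of "D *\<^sub>v p"] hnorm_nonneg[of "D *\<^sub>v \<phi>"] hnorm_nonneg[of \<phi>] s0 unfolding s_def[symmetric]
    by (intro add_mono mult_mono) auto
  also have "\<dots> = 2 * hnorm p * hnorm \<phi> * s" by (simp add: algebra_simps)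
  finally have "cmod (hinner \<phi> (D *\<^sub>v \<phi>)) \<le> 2 * hnorm p * hnorm \<phi> * sqrt (Re (mtrace (D * D)))"
    unfolding s_def trace_herm[OF D Dh] .
  thus ?thesis unfolding D_def p_def .
qed

end
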